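(* Let $k$ be a field, $G$ an ordered abelian group, and $K=k((G))$ the generalized power series field with its canonical valuation $v$. Let $D$ be a derivation on $K$ whose field of constants $\{a\in K\mid Da=0\}$ is $k$ (embedded as the constant series), and suppose $v$ is a differential valuation with respect to $D$. Then $(K,D)$ admits integration if and only if it admits asymptotic integration.
   Context: For a field $k$ and ordered abelian group $G$, $k((G))$ is the field of formal sums $a=\sum_{g\in G}c_gt^g$ with $c_g\in k$ and well-ordered support $\mathrm{supp}(a)=\{g\mid c_g\neq0\}$; its canonical valuation is $va=\min\mathrm{supp}(a)$, $v0=\infty$. A derivation $D$ on a field $K$ is an additive map with $D(ab)=aDb+bDa$; its field of constants is $C=\{a\in K\mid Da=0\}$. A valuation $v$ of $K$ is a differential valuation (for $D$) if $v$ is trivial on $C$ and for all $a,b\in K$ with $va\ge0$, $vb>0$, $b\ne0$ one has $v\!\left(\frac{b\,Da}{Db}\right)>0$. $(K,D)$ admits integration if $D:K\to K$ is surjective; it admits asymptotic integration if for every $b\in K\setminus\{0\}$ there is $a\in K$ with $v(b-Da)>vb$. *)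

theory Defs
  imports Main "HOL-Library.Extended"
begin

text \<open>Generalized power series field k((G)): formal sums represented as coefficient
functions G \<Rightarrow> k with well-ordered support. The field is the carrier set hahn_field.\<close>

definition hsupp :: "('g \<Rightarrow> 'k::zero) \<Rightarrow> 'g set" where
  "hsupp a = {g. a g \<noteq> 0}"

definition well_ordered_set :: "'g::linorder set \<Rightarrow> bool" where
  "well_ordered_set S \<longleftrightarrow> (\<forall>T \<subseteq> S. T \<noteq> {} \<longrightarrow> (\<exists>m\<in>T. \<forall>t\<in>T. m \<le> t))"

definition hahn_field :: "('g::linordered_ab_group_add \<Rightarrow> 'k::field) set" where
  "hahn_field = {a. well_ordered_set (hsupp a)}"

definition hzero :: "'g \<Rightarrow> 'k::field" where
  "hzero = (\<lambda>g. 0)"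

definition hconst :: "'k::field \<Rightarrow> ('g::linordered_ab_group_add \<Rightarrow> 'k)" where
  "hconst c = (\<lambda>g. if g = 0 then c else 0)"

definition hone :: "'g::linordered_ab_group_add \<Rightarrow> 'k::field" where
  "hone = hconst 1"

definition hadd :: "('g \<Rightarrow> 'k::field) \<Rightarrow> ('g \<Rightarrow> 'k) \<Rightarrow> ('g \<Rightarrow> 'k)" where
  "hadd a b = (\<lambda>g. a g + b g)"

definition hsub :: "('g \<Rightarrow> 'k::field) \<Rightarrow> ('g \<Rightarrow> 'k) \<Rightarrow> ('g \<Rightarrow> 'k)" where
  "hsub a b = (\<lambda>g. a g - b g)"

text \<open>Cauchy product; for series with well-ordered support the index set is finite.\<close>
definition hmult :: "('g::linordered_ab_group_add \<Rightarrow> 'k::field) \<Rightarrow> ('g \<Rightarrow> 'k) \<Rightarrow> ('g \<Rightarrow> 'k)" where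
  "hmult a b = (\<lambda>x. \<Sum>g\<in>{g. a g \<noteq> 0 \<and> b (x - g) \<noteq> 0}. a g * b (x - g))"

definition hinverse :: "('g::linordered_ab_group_add \<Rightarrow> 'k::field) \<Rightarrow> ('g \<Rightarrow> 'k)" where
  "hinverse a = (THE c. c \<in> hahn_field \<and> hmult a c = hone)"

definition hdivide :: "('g::linordered_ab_group_add \<Rightarrow> 'k::field) \<Rightarrow> ('g \<Rightarrow> 'k) \<Rightarrow> ('g \<Rightarrow> 'k)" where
  "hdivide a b = hmult a (hinverse b)"

definition hval :: "('g::linordered_ab_group_add \<Rightarrow> 'k::field) \<Rightarrow> 'g extended" where
  "hval a = (if a = hzero then Pinf else Fin (LEAST g. a g \<noteq> 0))"

definition is_derivation :: "(('g::linordered_ab_group_add \<Rightarrow> 'k::field) \<Rightarrow> ('g \<Rightarrow> 'k)) \<Rightarrow> bool" where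
  "is_derivation D \<longleftrightarrow>
     (\<forall>a\<in>hahn_field. D a \<in> hahn_field) \<and>
     (\<forall>a\<in>hahn_field. \<forall>b\<in>hahn_field. D (hadd a b) = hadd (D a) (D b)) \<and>
     (\<forall>a\<in>hahn_field. \<forall>b\<in>hahn_field. D (hmult a b) = hadd (hmult a (D b)) (hmult b (D a)))"

definition constants :: "(('g::linordered_ab_group_add \<Rightarrow> 'k::field) \<Rightarrow> ('g \<Rightarrow> 'k)) \<Rightarrow> ('g \<Rightarrow> 'k) set" where
  "constants D = {a \<in> hahn_field. D a = hzero}"

definition differential_valuation :: "(('g::linordered_ab_group_add \<Rightarrow> 'k::field) \<Rightarrow> ('g \<Rightarrow> 'k)) \<Rightarrow> bool" where
  "differential_valuation D \<longleftrightarrow>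
     (\<forall>c\<in>constants D. c \<noteq> hzero \<longrightarrow> hval c = Fin 0) \<and>
     (\<forall>a\<in>hahn_field. \<forall>b\<in>hahn_field.
        hval a \<ge> Fin 0 \<longrightarrow> hval b > Fin 0 \<longrightarrow> b \<noteq> hzero \<longrightarrow>
        hval (hdivide (hmult b (D a)) (D b)) > Fin 0)"

definition admits_integration :: "(('g::linordered_ab_group_add \<Rightarrow> 'k::field) \<Rightarrow> ('g \<Rightarrow> 'k)) \<Rightarrow> bool" where
  "admits_integration D \<longleftrightarrow> (\<forall>b\<in>hahn_field. \<exists>a\<in>hahn_field. D a = b)"

definition admits_asymptotic_integration :: "(('g::linordered_ab_group_add \<Rightarrow> 'k::field) \<Rightarrow> ('g \<Rightarrow> 'k)) \<Rightarrow> bool" where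
  "admits_asymptotic_integration D \<longleftrightarrow>
     (\<forall>b\<in>hahn_field. b \<noteq> hzero \<longrightarrow> (\<exists>a\<in>hahn_field. hval (hsub b (D a)) > hval b))"

end

theory Submission
  imports Defs Complex_Main
begin

lemma wo_iff:
  "well_ordered_set (S::'g::linorder set) \<longleftrightarrow> \<not>(\<exists>f. \<forall>i. f i \<in> S \<and> f (Suc i) < f i)"
proof
  assume wo: "well_ordered_set S"
  show "\<not>(\<exists>f. \<forall>i. f i \<in> S \<and> f (Suc i) < f i)"
  proof
    assume "\<exists>f. \<forall>i. f i \<in> S \<and> f (Suc i) < f i"
    then obtain f where f: "\<And>i. f i \<in> S" "\<And>i. f (Suc i) < f i" by blast
    have "range f \<subseteq> S" "range f \<noteq> {}" using f(1) by auto
    then have "\<exists>m\<in>range f. \<forall>t\<in>range f. m \<le> t"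
      using wo[unfolded well_ordered_set_def, rule_format, of "range f"] by blast
    then obtain j where "\<forall>t\<in>range f. f j \<le> t" by blast
    then have "f j \<le> f (Suc j)" by simp
    with f(2)[of j] show False by simp
  qed
next
  assume nd: "\<not>(\<exists>f. \<forall>i. f i \<in> S \<and> f (Suc i) < f i)"
  show "well_ordered_set S"
    unfolding well_ordered_set_def
  proof (intro allI impI)
    fix T assume T: "T \<subseteq> S" "T \<noteq> {}"
    show "\<exists>m\<in>T. \<forall>t\<in>T. m \<le> t"
    proof (rule ccontr)
      assume "\<not> ?thesis"
      then have "\<forall>t\<in>T. \<exists>t'. t' \<in> T \<and> t' < t" by (auto simp: not_le)
      then obtain g where g: "\<forall>t\<in>T. g t \<in> T \<and> g t < t" by (rule bchoice[elim_format]) blast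
      from T obtain t0 where t0: "t0 \<in> T" by blast
      define f where "f i = (g ^^ i) t0" for i
      have fT: "f i \<in> T" for i by (induction i) (simp_all add: f_def t0 g)
      have "f (Suc i) < f i" for i using g fT[of i] by (simp add: f_def)
      then have "\<forall>i. f i \<in> S \<and> f (Suc i) < f i" using fT T(1) by blast
      then show False using nd by blast
    qed
  qed
qed

lemma wo_subset: "well_ordered_set S \<Longrightarrow> T \<subseteq> S \<Longrightarrow> well_ordered_set T"
  unfolding well_ordered_set_def by (meson order_trans)

lemma wo_finite: "finite (S::'g::linorder set) \<Longrightarrow> well_ordered_set S"
  unfolding well_ordered_set_def
proof (intro allI impI)
  fix T assume "finite S" "T \<subseteq> S" "T \<noteq> {}"
  then have "finite T" using finite_subset by blast
  then have "Min T \<in> T" "\<forall>t\<in>T. Min T \<le> t" using \<open>T \<noteq> {}\<close> Min_in Min_le by blast+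
  then show "\<exists>m\<in>T. \<forall>t\<in>T. m \<le> t" by blast
qed

lemma wo_union:
  assumes "well_ordered_set (A::'g::linorder set)" "well_ordered_set B"
  shows "well_ordered_set (A \<union> B)"
  unfolding well_ordered_set_def
proof (intro allI impI)
  fix T assume T: "T \<subseteq> A \<union> B" "T \<noteq> {}"
  show "\<exists>m\<in>T. \<forall>t\<in>T. m \<le> t"
  proof (cases "T \<inter> A = {}")
    case True
    then have "T \<subseteq> B" using T by blast
    then show ?thesis using assms(2) T unfolding well_ordered_set_def by blast
  next
    case False
    then obtain a where a: "a \<in> T \<inter> A" "\<forall>t\<in>T \<inter> A. a \<le> t"
      using assms(1) unfolding well_ordered_set_def by (metis Int_lower2)
    show ?thesis
    proof (cases "T \<inter> B = {}")
      case True
      then show ?thesis using a T by blast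
    next
      case False
      then obtain b where b: "b \<in> T \<inter> B" "\<forall>t\<in>T \<inter> B. b \<le> t"
        using assms(2) unfolding well_ordered_set_def by (metis Int_lower2)
      show ?thesis
      proof (cases "a \<le> b")
        case True
        show ?thesis
        proof (intro bexI[of _ a] ballI)
          fix t assume t: "t \<in> T"
          then have "t \<in> A \<or> t \<in> B" using T by blast
          then show "a \<le> t" using a(2) b(2) True t by (meson IntI order_trans)
        qed (use a in blast)
      next
        case False
        then have ba: "b \<le> a" by simp
        show ?thesis
        proof (intro bexI[of _ b] ballI)
          fix t assume t: "t \<in> T"
          then have "t \<in> A \<or> t \<in> B" using T by blast
          then show "b \<le> t" using a(2) b(2) ba t by (meson IntI order_trans)
        qed (use b in blast)
      qed
    qed
  qed
qed

lemma wo_monosub: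
  fixes s :: "nat \<Rightarrow> 'g::linorder"
  assumes wo: "well_ordered_set A" and s: "\<And>i. s i \<in> A"
  shows "\<exists>\<sigma>. strict_mono \<sigma> \<and> (\<forall>i. s (\<sigma> i) \<le> s (\<sigma> (Suc i)))"
proof -
  obtain f where f: "strict_mono f" "monoseq (\<lambda>n. s (f n))" using seq_monosub[of s] by blast
  show ?thesis
  proof (cases "\<forall>m n. m \<le> n \<longrightarrow> s (f m) \<le> s (f n)")
    case True
    then show ?thesis using f by (intro exI[of _ f]) auto
  next
    case False
    then have dec: "\<forall>m n. m \<le> n \<longrightarrow> s (f n) \<le> s (f m)" using f(2) unfolding monoseq_def by blast
    have "range (\<lambda>n. s (f n)) \<subseteq> A" using s by auto
    then have "\<exists>m\<in>range (\<lambda>n. s (f n)). \<forall>t\<in>range (\<lambda>n. s (f n)). m \<le> t"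
      using wo[unfolded well_ordered_set_def, rule_format, of "range (\<lambda>n. s (f n))"] by blast
    then obtain j where j: "\<And>n. s (f j) \<le> s (f n)" by blast
    have eq: "s (f (i + j)) = s (f j)" for i
    proof -
      have "s (f (i + j)) \<le> s (f j)" using dec by simp
      then show ?thesis using j[of "i+j"] by (rule antisym)
    qed
    have sm: "strict_mono (\<lambda>i. f (i + j))" using f(1) by (simp add: strict_mono_def)
    have "\<forall>i. s (f (i + j)) \<le> s (f (Suc i + j))" using eq[of "Suc _"] eq by (metis order_refl)
    then show ?thesis using sm by blast
  qed
qed

lemma desc_less:
  fixes f :: "nat \<Rightarrow> 'g::linorder"
  assumes "\<And>i. f (Suc i) < f i" "m < n" shows "f n < f m"
  using assms(2)
proof (induction n)
  case 0 then show ?case by simp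
next
  case (Suc n)
  then show ?case using assms(1)[of n] by (metis less_Suc_eq order.strict_trans)
qed

definition setplus :: "'g::ab_group_add set \<Rightarrow> 'g set \<Rightarrow> 'g set" where
  "setplus A B = {a + b | a b. a \<in> A \<and> b \<in> B}"

lemma wo_plus:
  fixes A B :: "'g::linordered_ab_group_add set"
  assumes A: "well_ordered_set A" and B: "well_ordered_set B"
  shows "well_ordered_set (setplus A B)"
proof -
  have "\<not>(\<exists>f. \<forall>i. f i \<in> setplus A B \<and> f (Suc i) < f i)"
  proof
    assume "\<exists>f. \<forall>i. f i \<in> setplus A B \<and> f (Suc i) < f i"
    then obtain f where f: "\<And>i. f i \<in> setplus A B" "\<And>i. f (Suc i) < f i" by blast
    have "\<forall>i. \<exists>p. f i = fst p + snd p \<and> fst p \<in> A \<and> snd p \<in> B"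
      using f(1) unfolding setplus_def by force
    then obtain p where p: "\<forall>i. f i = fst (p i) + snd (p i) \<and> fst (p i) \<in> A \<and> snd (p i) \<in> B"
      using choice[of "\<lambda>i p. f i = fst p + snd p \<and> fst p \<in> A \<and> snd p \<in> B"] by blast
    define a where "a i = fst (p i)" for i
    define b where "b i = snd (p i)" for i
    have ab: "\<And>i. f i = a i + b i" "\<And>i. a i \<in> A" "\<And>i. b i \<in> B" using p by (auto simp: a_def b_def)
    obtain \<sigma> where \<sigma>: "strict_mono \<sigma>" "\<And>i. a (\<sigma> i) \<le> a (\<sigma> (Suc i))"
      using wo_monosub[OF A, of a] ab(2) by blast
    have "b (\<sigma> (Suc i)) < b (\<sigma> i)" for i
    proof -
      have "f (\<sigma> (Suc i)) < f (\<sigma> i)" using desc_less[of f, OF f(2)] \<sigma>(1) by (simp add: strict_mono_def)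
      show ?thesis
      proof (rule ccontr)
        assume "\<not> ?thesis"
        then have "b (\<sigma> i) \<le> b (\<sigma> (Suc i))" by simp
        then have "a (\<sigma> i) + b (\<sigma> i) \<le> a (\<sigma> (Suc i)) + b (\<sigma> (Suc i))"
          using add_mono \<sigma>(2)[of i] by blast
        then show False using \<open>f (\<sigma> (Suc i)) < f (\<sigma> i)\<close> ab(1) by (simp add: not_less[symmetric])
      qed
    qed
    then have "\<forall>i. b (\<sigma> i) \<in> B \<and> b (\<sigma> (Suc i)) < b (\<sigma> i)" using ab(3) by blast
    then have "\<exists>f. \<forall>i. f i \<in> B \<and> f (Suc i) < f i" by (rule exI[of _ "\<lambda>i. b (\<sigma> i)"])
    then show False using B unfolding wo_iff by blast
  qed
  then show ?thesis unfolding wo_iff by blast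
qed

lemma wo_fin:
  fixes A B :: "'g::linordered_ab_group_add set"
  assumes A: "well_ordered_set A" and B: "well_ordered_set B"
  shows "finite {g\<in>A. x - g \<in> B}"
proof (rule ccontr)
  assume "infinite {g\<in>A. x - g \<in> B}"
  then obtain s :: "nat \<Rightarrow> 'g" where s: "inj s" "range s \<subseteq> {g\<in>A. x - g \<in> B}"
    using infinite_countable_subset by blast
  obtain \<sigma> where \<sigma>: "strict_mono \<sigma>" "\<And>i. s (\<sigma> i) \<le> s (\<sigma> (Suc i))"
    using wo_monosub[OF A, of s] s by blast
  have "s (\<sigma> i) < s (\<sigma> (Suc i))" for i
    using \<sigma> s(1) by (metis inj_eq le_less n_not_Suc_n strict_mono_eq)
  then have "x - s (\<sigma> (Suc i)) < x - s (\<sigma> i)" for i by simp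
  moreover have "x - s (\<sigma> i) \<in> B" for i using s(2) by blast
  ultimately have "\<exists>f. \<forall>i. f i \<in> B \<and> f (Suc i) < f i"
    by (intro exI[of _ "\<lambda>i. x - s (\<sigma> i)"]) auto
  then show False using B unfolding wo_iff by blast
qed


definition hmono :: "'k::field \<Rightarrow> 'g::linordered_ab_group_add \<Rightarrow> ('g \<Rightarrow> 'k)" where
  "hmono c \<gamma> = (\<lambda>g. if g = \<gamma> then c else 0)"

definition hneg :: "('g \<Rightarrow> 'k::field) \<Rightarrow> ('g \<Rightarrow> 'k)" where
  "hneg a = (\<lambda>g. - a g)"

abbreviation "K \<equiv> hahn_field"

lemma inK: "a \<in> hahn_field \<longleftrightarrow> well_ordered_set (hsupp a)"
  by (simp add: hahn_field_def)

lemma hsupp_iff[simp]: "g \<in> hsupp a \<longleftrightarrow> a g \<noteq> 0"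
  by (simp add: hsupp_def)

lemma hzero_in[simp]: "(hzero :: 'g::linordered_ab_group_add \<Rightarrow> 'k::field) \<in> K"
  unfolding inK by (rule wo_finite) (simp add: hsupp_def hzero_def)

lemma hmono_in[simp]: "(hmono c \<gamma> :: 'g::linordered_ab_group_add \<Rightarrow> 'k::field) \<in> K"
  unfolding inK by (rule wo_finite, rule finite_subset[of _ "{\<gamma>}"]) (auto simp: hsupp_def hmono_def)

lemma hconst_mono: "hconst c = hmono c 0"
  by (simp add: hconst_def hmono_def)

lemma hconst_in[simp]: "hconst c \<in> K"
  by (simp add: hconst_mono)

lemma hone_in[simp]: "hone \<in> K"
  by (simp add: hone_def)

lemma hadd_in[simp]: "a \<in> K \<Longrightarrow> b \<in> K \<Longrightarrow> hadd a b \<in> K"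
  unfolding inK by (rule wo_subset[OF wo_union[of "hsupp a" "hsupp b"]]) (auto simp: hadd_def)

lemma hsub_in[simp]: "a \<in> K \<Longrightarrow> b \<in> K \<Longrightarrow> hsub a b \<in> K"
  unfolding inK by (rule wo_subset[OF wo_union[of "hsupp a" "hsupp b"]]) (auto simp: hsub_def)

lemma hneg_in[simp]: "a \<in> K \<Longrightarrow> hneg a \<in> K"
  unfolding inK by (rule wo_subset[of "hsupp a"]) (auto simp: hneg_def)

lemma hzero_apply[simp]: "hzero g = 0" by (simp add: hzero_def)

lemma hmult_idx_fin:
  assumes "a \<in> K" "b \<in> K"
  shows "finite {g. a g \<noteq> 0 \<and> b (x - g) \<noteq> 0}"
proof -
  have "{g. a g \<noteq> 0 \<and> b (x - g) \<noteq> 0} = {g\<in>hsupp a. x - g \<in> hsupp b}" by auto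
  then show ?thesis using wo_fin assms unfolding inK by metis
qed

lemma hmult_sum:
  assumes "a \<in> K" "b \<in> K" "finite F" "{g. a g \<noteq> 0 \<and> b (x - g) \<noteq> 0} \<subseteq> F"
  shows "hmult a b x = (\<Sum>g\<in>F. a g * b (x - g))"
  unfolding hmult_def
  by (rule sum.mono_neutral_left) (use assms in auto)

lemma setplusI: "u \<in> A \<Longrightarrow> w \<in> B \<Longrightarrow> c = u + w \<Longrightarrow> c \<in> setplus A B"
  unfolding setplus_def by blast

lemma hmult_supp: "hsupp (hmult a b) \<subseteq> setplus (hsupp a) (hsupp b)"
proof
  fix x assume "x \<in> hsupp (hmult a b)"
  then have nz: "hmult a b x \<noteq> 0" by simp
  have "{g. a g \<noteq> 0 \<and> b (x - g) \<noteq> 0} \<noteq> {}"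
  proof
    assume e: "{g. a g \<noteq> 0 \<and> b (x - g) \<noteq> 0} = {}"
    have "hmult a b x = 0" unfolding hmult_def e by simp
    then show False using nz by simp
  qed
  then obtain g where "a g \<noteq> 0" "b (x - g) \<noteq> 0" by blast
  then show "x \<in> setplus (hsupp a) (hsupp b)" unfolding setplus_def
    by (intro CollectI exI[of _ g] exI[of _ "x - g"]) simp
qed

lemma hmult_in[simp]: "a \<in> K \<Longrightarrow> b \<in> K \<Longrightarrow> hmult a b \<in> K"
  unfolding inK using wo_subset[OF wo_plus hmult_supp] by blast

lemma hmult_comm: "hmult a b = hmult b a"
proof
  fix x
  show "hmult a b x = hmult b a x"
    unfolding hmult_def
    by (rule sum.reindex_bij_witness[of _ "\<lambda>g. x - g" "\<lambda>g. x - g"]) (auto simp: mult.commute)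
qed

lemma hmult_hadd:
  assumes "a \<in> K" "b \<in> K" "c \<in> K"
  shows "hmult a (hadd b c) = hadd (hmult a b) (hmult a c)"
proof
  fix x
  let ?F = "{g. a g \<noteq> 0 \<and> b (x - g) \<noteq> 0} \<union> {g. a g \<noteq> 0 \<and> c (x - g) \<noteq> 0}"
  have fin: "finite ?F" using hmult_idx_fin assms by blast
  have "hmult a (hadd b c) x = (\<Sum>g\<in>?F. a g * hadd b c (x - g))"
    by (rule hmult_sum[OF assms(1) hadd_in[OF assms(2,3)] fin]) (auto simp: hadd_def)
  also have "\<dots> = (\<Sum>g\<in>?F. a g * b (x - g)) + (\<Sum>g\<in>?F. a g * c (x - g))"
    by (simp add: hadd_def distrib_left sum.distrib)
  also have "\<dots> = hmult a b x + hmult a c x"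
    using hmult_sum[OF assms(1,2) fin] hmult_sum[OF assms(1,3) fin] by auto
  finally show "hmult a (hadd b c) x = hadd (hmult a b) (hmult a c) x" by (simp add: hadd_def)
qed

lemma hmult_hsub:
  assumes "a \<in> K" "b \<in> K" "c \<in> K"
  shows "hmult a (hsub b c) = hsub (hmult a b) (hmult a c)"
proof
  fix x
  let ?F = "{g. a g \<noteq> 0 \<and> b (x - g) \<noteq> 0} \<union> {g. a g \<noteq> 0 \<and> c (x - g) \<noteq> 0}"
  have fin: "finite ?F" using hmult_idx_fin assms by blast
  have "hmult a (hsub b c) x = (\<Sum>g\<in>?F. a g * hsub b c (x - g))"
    by (rule hmult_sum[OF assms(1) hsub_in[OF assms(2,3)] fin]) (auto simp: hsub_def)
  also have "\<dots> = (\<Sum>g\<in>?F. a g * b (x - g)) - (\<Sum>g\<in>?F. a g * c (x - g))"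
    by (simp add: hsub_def right_diff_distrib sum_subtractf)
  also have "\<dots> = hmult a b x - hmult a c x"
    using hmult_sum[OF assms(1,2) fin] hmult_sum[OF assms(1,3) fin] by auto
  finally show "hmult a (hsub b c) x = hsub (hmult a b) (hmult a c) x" by (simp add: hsub_def)
qed

lemma hmult_hneg:
  assumes "a \<in> K" "b \<in> K"
  shows "hmult a (hneg b) = hneg (hmult a b)"
  unfolding hmult_def hneg_def by (simp add: sum_negf)

lemma hmult_hmono: "hmult a (hmono c \<gamma>) = (\<lambda>x. a (x - \<gamma>) * c)"
proof
  fix x
  show "hmult a (hmono c \<gamma>) x = a (x - \<gamma>) * c"
  proof (cases "a (x - \<gamma>) * c = 0")
    case True
    then have e: "{g. a g \<noteq> 0 \<and> hmono c \<gamma> (x - g) \<noteq> 0} = {}"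
      by (auto simp: hmono_def split: if_splits)
    show ?thesis unfolding hmult_def e using True by simp
  next
    case False
    then have e: "{g. a g \<noteq> 0 \<and> hmono c \<gamma> (x - g) \<noteq> 0} = {x - \<gamma>}"
      by (auto simp: hmono_def split: if_splits)
    show ?thesis unfolding hmult_def e by (simp add: hmono_def)
  qed
qed

lemma hmult_hone: "hmult a hone = a"
  unfolding hone_def hconst_mono hmult_hmono by simp

lemma hmult_hzero: "hmult a hzero = hzero"
  unfolding hmult_def by (auto simp: hzero_def)


lemma hmult_assoc:
  assumes a: "a \<in> K" and b: "b \<in> K" and c: "c \<in> K"
  shows "hmult (hmult a b) c = hmult a (hmult b c)"
proof
  fix x
  define H where "H = {h \<in> setplus (hsupp a) (hsupp b). x - h \<in> hsupp c}"
  define G where "G h = {g. a g \<noteq> 0 \<and> b (h - g) \<noteq> 0}" for h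
  define A where "A = {g \<in> hsupp a. x - g \<in> setplus (hsupp b) (hsupp c)}"
  define B where "B g = {h. b h \<noteq> 0 \<and> c (x - g - h) \<noteq> 0}" for g
  have wa: "well_ordered_set (hsupp a)" and wb: "well_ordered_set (hsupp b)"
    and wc: "well_ordered_set (hsupp c)" using a b c by (auto simp: inK)
  have finH: "finite H" unfolding H_def by (rule wo_fin[OF wo_plus[OF wa wb] wc])
  have finA: "finite A" unfolding A_def by (rule wo_fin[OF wa wo_plus[OF wb wc]])
  have finG: "finite (G h)" for h unfolding G_def by (rule hmult_idx_fin[OF a b])
  have finB: "finite (B g)" for g unfolding B_def using hmult_idx_fin[OF b c] by simp
  have "hmult (hmult a b) c x = (\<Sum>h\<in>H. hmult a b h * c (x - h))"
    apply (rule hmult_sum[OF hmult_in[OF a b] c finH])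
    using hmult_supp[of a b] by (auto simp: H_def)
  also have "\<dots> = (\<Sum>h\<in>H. \<Sum>g\<in>G h. a g * b (h - g) * c (x - h))"
    by (rule sum.cong[OF refl]) (simp add: hmult_def G_def sum_distrib_right)
  also have "\<dots> = (\<Sum>(h, g)\<in>Sigma H G. a g * b (h - g) * c (x - h))"
    by (rule sum.Sigma[OF finH]) (use finG in blast)
  also have "\<dots> = (\<Sum>(g, h)\<in>Sigma A B. a g * (b h * c (x - g - h)))"
  proof (rule sum.reindex_bij_witness[of _ "\<lambda>(g, h). (g + h, g)" "\<lambda>(h, g). (g, h - g)"])
    fix p assume "p \<in> Sigma H G"
    then show "(case case p of (h, g) \<Rightarrow> (g, h - g) of (g, h) \<Rightarrow> (g + h, g)) = p"
      by (cases p) simp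
  next
    fix p assume p: "p \<in> Sigma H G"
    obtain h g where pe: "p = (h, g)" by force
    from p have "a g \<noteq> 0" "b (h - g) \<noteq> 0" "c (x - h) \<noteq> 0" by (auto simp: pe H_def G_def)
    moreover have "x - g \<in> setplus (hsupp b) (hsupp c)"
      by (rule setplusI[of "h - g" _ "x - h"]) (use calculation in simp_all)
    ultimately have "g \<in> A" "h - g \<in> B g"
      unfolding A_def B_def by (auto simp: diff_diff_eq)
    then show "(case p of (h, g) \<Rightarrow> (g, h - g)) \<in> Sigma A B" by (simp add: pe)
  next
    fix q assume "q \<in> Sigma A B"
    then show "(case case q of (g, h) \<Rightarrow> (g + h, g) of (h, g) \<Rightarrow> (g, h - g)) = q"
      by (cases q) simp
  next
    fix q assume q: "q \<in> Sigma A B"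
    obtain g h where qe: "q = (g, h)" by force
    from q have "a g \<noteq> 0" "b h \<noteq> 0" "c (x - g - h) \<noteq> 0" by (auto simp: qe A_def B_def)
    moreover have "g + h \<in> setplus (hsupp a) (hsupp b)"
      by (rule setplusI[of g _ h]) (use calculation in simp_all)
    ultimately have "g + h \<in> H" "g \<in> G (g + h)"
      unfolding H_def G_def by (auto simp: diff_diff_eq)
    then show "(case q of (g, h) \<Rightarrow> (g + h, g)) \<in> Sigma H G" by (simp add: qe)
  next
    fix p assume "p \<in> Sigma H G"
    obtain h g where pe: "p = (h, g)" by force
    show "(case case p of (h, g) \<Rightarrow> (g, h - g) of (g, h) \<Rightarrow> a g * (b h * c (x - g - h))) =
          (case p of (h, g) \<Rightarrow> a g * b (h - g) * c (x - h))"
      by (simp add: pe mult.assoc diff_diff_eq)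
  qed
  also have "\<dots> = (\<Sum>g\<in>A. \<Sum>h\<in>B g. a g * (b h * c (x - g - h)))"
    by (rule sum.Sigma[symmetric, OF finA]) (use finB in blast)
  also have "\<dots> = (\<Sum>g\<in>A. a g * hmult b c (x - g))"
    by (rule sum.cong[OF refl]) (simp add: hmult_def B_def sum_distrib_left)
  also have "\<dots> = hmult a (hmult b c) x"
    apply (rule hmult_sum[OF a hmult_in[OF b c] finA, symmetric])
    using hmult_supp[of b c] by (auto simp: A_def)
  finally show "hmult (hmult a b) c x = hmult a (hmult b c) x" .
qed


lemma hval_eq:
  assumes "a \<gamma> \<noteq> 0" "\<And>g. g < \<gamma> \<Longrightarrow> a g = 0"
  shows "hval a = Fin \<gamma>"
proof -
  have "a \<noteq> hzero" using assms(1) by (auto simp: hzero_def)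
  moreover have "(LEAST g. a g \<noteq> 0) = \<gamma>"
    by (rule Least_equality) (use assms in \<open>auto simp: not_less[symmetric]\<close>)
  ultimately show ?thesis by (simp add: hval_def)
qed

lemma hval_hzero[simp]: "hval hzero = Pinf" by (simp add: hval_def)

lemma hval_Pinf_iff: "hval a = Pinf \<longleftrightarrow> a = hzero" by (simp add: hval_def)

lemma hzero_iff: "a = hzero \<longleftrightarrow> (\<forall>g. a g = 0)" by (auto simp: hzero_def)

lemma lead_exists:
  assumes "a \<in> K" "a \<noteq> hzero"
  shows "\<exists>\<gamma>. a \<gamma> \<noteq> 0 \<and> (\<forall>g<\<gamma>. a g = 0)"
proof -
  have "hsupp a \<noteq> {}" using assms(2) by (auto simp: hzero_iff)
  then obtain m where "m \<in> hsupp a" "\<forall>t\<in>hsupp a. m \<le> t"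
    using assms(1) unfolding inK well_ordered_set_def by blast
  then show ?thesis by (auto intro!: exI[of _ m] simp: not_le[symmetric])
qed

lemma hval_cases:
  assumes "a \<in> K"
  obtains "a = hzero" | \<gamma> where "hval a = Fin \<gamma>" "a \<gamma> \<noteq> 0" "\<And>g. g < \<gamma> \<Longrightarrow> a g = 0"
  using lead_exists[OF assms] hval_eq by blast

lemma hval_ge:
  assumes "a \<in> K"
  shows "Fin q \<le> hval a \<longleftrightarrow> (\<forall>g<q. a g = 0)"
proof (cases rule: hval_cases[OF assms])
  case 1 then show ?thesis by simp
next
  case (2 \<gamma>)
  then show ?thesis by (auto simp: not_le[symmetric])
qed

lemma hval_gt:
  assumes "a \<in> K"
  shows "Fin q < hval a \<longleftrightarrow> (\<forall>g\<le>q. a g = 0)"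
proof (cases rule: hval_cases[OF assms])
  case 1 then show ?thesis by simp
next
  case (2 \<gamma>)
  then show ?thesis by (auto simp: not_le[symmetric])
qed

lemma hval_Fin_iff:
  assumes "a \<in> K"
  shows "hval a = Fin \<gamma> \<longleftrightarrow> a \<gamma> \<noteq> 0 \<and> (\<forall>g<\<gamma>. a g = 0)"
  using hval_cases[OF assms] hval_eq by (metis extended.distinct(1) extended.inject hval_hzero)

lemma hval_not_Minf: "hval a \<noteq> Minf" by (simp add: hval_def)

lemma hmult_lead:
  assumes "a \<gamma> \<noteq> 0" "\<And>g. g < \<gamma> \<Longrightarrow> a g = 0" "b \<delta> \<noteq> 0" "\<And>g. g < \<delta> \<Longrightarrow> b g = 0"
  shows "hmult a b (\<gamma> + \<delta>) = a \<gamma> * b \<delta>" "\<And>x. x < \<gamma> + \<delta> \<Longrightarrow> hmult a b x = 0"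
proof -
  have ge1: "\<gamma> \<le> g" if "a g \<noteq> 0" for g using assms(2)[of g] that by (meson not_le)
  have ge2: "\<delta> \<le> h" if "b h \<noteq> 0" for h using assms(4)[of h] that by (meson not_le)
  have e: "{g. a g \<noteq> 0 \<and> b (\<gamma> + \<delta> - g) \<noteq> 0} = {\<gamma>}"
  proof (rule set_eqI)
    fix g
    show "g \<in> {g. a g \<noteq> 0 \<and> b (\<gamma> + \<delta> - g) \<noteq> 0} \<longleftrightarrow> g \<in> {\<gamma>}"
    proof
      assume "g \<in> {g. a g \<noteq> 0 \<and> b (\<gamma> + \<delta> - g) \<noteq> 0}"
      then have g: "a g \<noteq> 0" "b (\<gamma> + \<delta> - g) \<noteq> 0" by auto
      have "\<gamma> \<le> g" using ge1[OF g(1)] .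
      moreover have "\<delta> \<le> \<gamma> + \<delta> - g" using ge2[OF g(2)] .
      then have "g \<le> \<gamma>" by (simp add: le_diff_eq)
      ultimately show "g \<in> {\<gamma>}" by simp
    next
      assume "g \<in> {\<gamma>}"
      then show "g \<in> {g. a g \<noteq> 0 \<and> b (\<gamma> + \<delta> - g) \<noteq> 0}" using assms(1,3) by simp
    qed
  qed
  show "hmult a b (\<gamma> + \<delta>) = a \<gamma> * b \<delta>" unfolding hmult_def e by simp
  fix x assume x: "x < \<gamma> + \<delta>"
  have e2: "{g. a g \<noteq> 0 \<and> b (x - g) \<noteq> 0} = {}"
  proof (rule ccontr)
    assume "{g. a g \<noteq> 0 \<and> b (x - g) \<noteq> 0} \<noteq> {}"
    then obtain g where g: "a g \<noteq> 0" "b (x - g) \<noteq> 0" by blast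
    have "\<gamma> \<le> g" "\<delta> \<le> x - g" using ge1[OF g(1)] ge2[OF g(2)] by auto
    then have "\<gamma> + \<delta> \<le> g + (x - g)" by (rule add_mono)
    then show False using x by simp
  qed
  show "hmult a b x = 0" unfolding hmult_def e2 by simp
qed

lemma hval_mult:
  assumes "a \<in> K" "b \<in> K" "hval a = Fin \<alpha>" "hval b = Fin \<beta>"
  shows "hval (hmult a b) = Fin (\<alpha> + \<beta>)"
proof -
  have A: "a \<alpha> \<noteq> 0" "\<And>g. g < \<alpha> \<Longrightarrow> a g = 0" using assms(1,3) hval_Fin_iff by blast+
  have B: "b \<beta> \<noteq> 0" "\<And>g. g < \<beta> \<Longrightarrow> b g = 0" using assms(2,4) hval_Fin_iff by blast+
  note L = hmult_lead[of a \<alpha> b \<beta>, OF A(1) A(2) B(1) B(2)]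
  show ?thesis using L A(1) B(1) by (intro hval_eq) auto
qed

lemma hmult_nz:
  assumes "a \<in> K" "b \<in> K" "a \<noteq> hzero" "b \<noteq> hzero"
  shows "hmult a b \<noteq> hzero"
proof -
  obtain \<alpha> \<beta> where "hval a = Fin \<alpha>" "hval b = Fin \<beta>"
    using assms hval_cases by metis
  then show ?thesis using hval_mult assms by (metis extended.distinct(1) hval_Pinf_iff)
qed

lemma hval_hmono: "c \<noteq> 0 \<Longrightarrow> hval (hmono c \<gamma>) = Fin \<gamma>"
  by (rule hval_eq) (auto simp: hmono_def)

lemma hval_hconst: "c \<noteq> 0 \<Longrightarrow> hval (hconst c) = Fin 0"
  by (simp add: hconst_mono hval_hmono)

lemma hconst_zero: "hconst 0 = hzero"
  by (auto simp: hconst_def hzero_def)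


lemma hval_hadd_lead:
  assumes "u \<in> K" "w \<in> K" "hval u = Fin \<alpha>" "Fin \<alpha> < hval w"
  shows "hval (hadd u w) = Fin \<alpha>"
proof (rule hval_eq)
  have u: "u \<alpha> \<noteq> 0" "\<forall>g<\<alpha>. u g = 0" using hval_Fin_iff[OF assms(1)] assms(3) by blast+
  have w: "\<forall>g\<le>\<alpha>. w g = 0" using hval_gt[OF assms(2)] assms(4) by blast
  show "hadd u w \<alpha> \<noteq> 0" using u w by (simp add: hadd_def)
  show "hadd u w g = 0" if "g < \<alpha>" for g using u w that by (simp add: hadd_def)
qed

lemma hval_ultra:
  assumes "u \<in> K" "w \<in> K" "Fin q \<le> hval u" "Fin q \<le> hval w"
  shows "Fin q \<le> hval (hadd u w)" "Fin q \<le> hval (hsub u w)"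
proof -
  have u: "\<forall>g<q. u g = 0" using hval_ge[OF assms(1)] assms(3) by blast
  have w: "\<forall>g<q. w g = 0" using hval_ge[OF assms(2)] assms(4) by blast
  have "\<forall>g<q. hadd u w g = 0" using u w by (simp add: hadd_def)
  then show "Fin q \<le> hval (hadd u w)" using hval_ge[OF hadd_in[OF assms(1,2)]] by blast
  have "\<forall>g<q. hsub u w g = 0" using u w by (simp add: hsub_def)
  then show "Fin q \<le> hval (hsub u w)" using hval_ge[OF hsub_in[OF assms(1,2)]] by blast
qed

lemma hval_ultra_gt:
  assumes "u \<in> K" "w \<in> K" "Fin q < hval u" "Fin q < hval w"
  shows "Fin q < hval (hadd u w)" "Fin q < hval (hsub u w)"
proof -
  have u: "\<forall>g\<le>q. u g = 0" using hval_gt[OF assms(1)] assms(3) by blast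
  have w: "\<forall>g\<le>q. w g = 0" using hval_gt[OF assms(2)] assms(4) by blast
  have "\<forall>g\<le>q. hadd u w g = 0" using u w by (simp add: hadd_def)
  then show "Fin q < hval (hadd u w)" using hval_gt[OF hadd_in[OF assms(1,2)]] by blast
  have "\<forall>g\<le>q. hsub u w g = 0" using u w by (simp add: hsub_def)
  then show "Fin q < hval (hsub u w)" using hval_gt[OF hsub_in[OF assms(1,2)]] by blast
qed

definition zlt where
  "zlt Q \<mu> x y \<longleftrightarrow> (\<exists>q. Q x = Fin q \<and> hval (hsub y x) = Fin (\<mu> q) \<and> Q x < Q y)"

lemma pseudo_limit_zorn:
  fixes Q :: "('g::linordered_ab_group_add \<Rightarrow> 'k::field) \<Rightarrow> 'g extended"
    and \<mu> :: "'g \<Rightarrow> 'g"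
  assumes mono: "\<And>p q. p < q \<Longrightarrow> \<mu> p < \<mu> q"
    and H1: "\<And>x f q. x \<in> K \<Longrightarrow> f \<in> K \<Longrightarrow> Q x = Fin q \<Longrightarrow> hval f = Fin (\<mu> q) \<Longrightarrow> Fin q \<le> Q (hadd x f)"
    and H2: "\<And>x q. x \<in> K \<Longrightarrow> Q x = Fin q \<Longrightarrow> \<exists>f\<in>K. hval f = Fin (\<mu> q) \<and> Fin q < Q (hadd x f)"
    and noMinf: "\<And>x. x \<in> K \<Longrightarrow> Q x \<noteq> Minf"
  shows "\<exists>x\<in>K. Q x = Pinf"
proof -
  define P where "P x y \<longleftrightarrow> x = y \<or> zlt Q \<mu> x y" for x y
  have ltQ: "Q x < Q y" if "zlt Q \<mu> x y" for x y using that by (auto simp: zlt_def)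
  have Fin_of: "\<exists>q. Q x = Fin q" if "x \<in> K" "Q x \<noteq> Pinf" for x
    using that noMinf by (cases "Q x") auto
  have ztrans: "zlt Q \<mu> x z" if prem: "x \<in> K" "y \<in> K" "z \<in> K" "zlt Q \<mu> x y" "zlt Q \<mu> y z" for x y z
  proof -
    obtain qx where qx: "Q x = Fin qx" "hval (hsub y x) = Fin (\<mu> qx)" "Q x < Q y"
      using prem(4) by (auto simp: zlt_def)
    obtain qy where qy: "Q y = Fin qy" "hval (hsub z y) = Fin (\<mu> qy)" "Q y < Q z"
      using prem(5) by (auto simp: zlt_def)
    have "qx < qy" using qx qy by simp
    then have "Fin (\<mu> qx) < hval (hsub z y)" using qy mono by simp
    then have "hval (hadd (hsub y x) (hsub z y)) = Fin (\<mu> qx)"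
      using hval_hadd_lead[OF hsub_in[OF prem(2,1)] hsub_in[OF prem(3,2)] qx(2)] \<open>Fin (\<mu> qx) < hval (hsub z y)\<close>
      by blast
    moreover have "hadd (hsub y x) (hsub z y) = hsub z x" by (auto simp: hadd_def hsub_def)
    moreover have "Q x < Q z" using qx(3) qy(3) by (rule less_trans)
    ultimately show ?thesis using qx unfolding zlt_def by auto
  qed
  have po: "partial_order_on K (relation_of P K)"
  proof (rule partial_order_on_relation_ofI)
    show "P a a" for a by (simp add: P_def)
    show "P a c" if "a \<in> K" "b \<in> K" "c \<in> K" "P a b" "P b c" for a b c
      using that ztrans unfolding P_def by blast
    show "a = b" if "a \<in> K" "b \<in> K" "P a b" "P b a" for a b
      using that ltQ unfolding P_def by (meson less_asym)
  qed
  have ch: "\<exists>u\<in>K. \<forall>a\<in>C. P a u" if C: "C \<in> Chains (relation_of P K)" for C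
  proof -
    have CK: "C \<subseteq> K" and comp: "\<And>a b. a \<in> C \<Longrightarrow> b \<in> C \<Longrightarrow> P a b \<or> P b a"
      using C unfolding Chains_def relation_of_def by auto
    show ?thesis
    proof (cases "\<exists>m\<in>C. \<forall>a\<in>C. P a m")
      case True
      then show ?thesis using CK by blast
    next
      case False
      show ?thesis
      proof (cases "C = {}")
        case True then show ?thesis by (intro bexI[of _ hzero]) auto
      next
        case Cne: False
        have succ: "\<exists>a'\<in>C. zlt Q \<mu> a a'" if "a \<in> C" for a
        proof -
          from False that obtain b where "b \<in> C" "\<not> P b a" by blast
          then show ?thesis using comp[OF that \<open>b \<in> C\<close>] unfolding P_def by blast
        qed
        define qf where "qf a = (case Q a of Fin q \<Rightarrow> q)" for a
        have Qf: "Q a = Fin (qf a)" if "a \<in> C" for a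
          using succ[OF that] by (auto simp: zlt_def qf_def)
        have zlt_val: "hval (hsub b a) = Fin (\<mu> (qf a))" "qf a < qf b"
          if "a \<in> C" "b \<in> C" "zlt Q \<mu> a b" for a b
          using that Qf[OF that(1)] Qf[OF that(2)] by (auto simp: zlt_def)
        have agree: "a g = b g" if "a \<in> C" "b \<in> C" "g < \<mu> (qf a)" "g < \<mu> (qf b)" for a b g
        proof -
          have disj: "a = b \<or> zlt Q \<mu> a b \<or> zlt Q \<mu> b a" using comp[OF that(1,2)] unfolding P_def by blast
          have one: "a g = b g" if "zlt Q \<mu> a b" "g < \<mu> (qf a)" "a \<in> C" "b \<in> C" for a b
          proof -
            have "a \<in> K" "b \<in> K" using that(3,4) CK by blast+
            then have abK: "hsub b a \<in> K" by simp
            have "hsub b a g = 0" using zlt_val[OF that(3,4,1)] hval_Fin_iff[OF abK] that(2)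
              by blast
            then show ?thesis by (simp add: hsub_def)
          qed
          from disj show ?thesis
          proof (elim disjE)
            assume "zlt Q \<mu> a b" then show ?thesis using one that by blast
          next
            assume "zlt Q \<mu> b a" then have "b g = a g" using one that by blast
            then show ?thesis by simp
          qed simp
        qed
        define u where "u g = (if \<exists>a\<in>C. g < \<mu> (qf a) then (SOME a. a \<in> C \<and> g < \<mu> (qf a)) g else 0)" for g
        have u_eq: "u g = a g" if "a \<in> C" "g < \<mu> (qf a)" for a g
        proof -
          have ex: "\<exists>a\<in>C. g < \<mu> (qf a)" using that by blast
          let ?b = "SOME a. a \<in> C \<and> g < \<mu> (qf a)"
          have b: "?b \<in> C" "g < \<mu> (qf ?b)" using someI_ex[of "\<lambda>a. a \<in> C \<and> g < \<mu> (qf a)"] ex by blast+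
          have "u g = ?b g" unfolding u_def using ex by simp
          also have "?b g = a g" using agree[OF b(1) that(1) b(2) that(2)] .
          finally show ?thesis .
        qed
        have uK: "u \<in> K"
          unfolding inK well_ordered_set_def
        proof (intro allI impI)
          fix T assume T: "T \<subseteq> hsupp u" "T \<noteq> {}"
          then obtain t where t: "t \<in> T" by blast
          then have "u t \<noteq> 0" using T by auto
          then obtain a where a: "a \<in> C" "t < \<mu> (qf a)" unfolding u_def by (auto split: if_splits)
          have sub: "{s\<in>T. s \<le> t} \<subseteq> hsupp a"
          proof
            fix s assume "s \<in> {s\<in>T. s \<le> t}"
            then have "s \<in> T" "s < \<mu> (qf a)" using a by auto
            then show "s \<in> hsupp a" using u_eq[OF a(1)] T by auto
          qed
          have "a \<in> K" using a CK by blast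
          then have wa: "well_ordered_set (hsupp a)" by (simp add: inK)
          have ne: "{s\<in>T. s \<le> t} \<noteq> {}" using t by auto
          obtain m where m: "m \<in> {s\<in>T. s \<le> t}" "\<forall>s\<in>{s\<in>T. s \<le> t}. m \<le> s"
            using wa[unfolded well_ordered_set_def, rule_format, OF sub ne] by blast
          have mT: "m \<in> T" "m \<le> t" using m(1) by auto
          have "m \<le> s" if "s \<in> T" for s
          proof (cases "s \<le> t")
            case True then show ?thesis using m(2) that by blast
          next
            case False then show ?thesis using mT(2) by simp
          qed
          then show "\<exists>m\<in>T. \<forall>s\<in>T. m \<le> s" using mT(1) by blast
        qed
        have uval: "hval (hsub u a) = Fin (\<mu> (qf a))" if aC: "a \<in> C" for a
        proof -
          obtain a' where a': "a' \<in> C" "zlt Q \<mu> a a'" using succ[OF aC] by blast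
          have v: "hval (hsub a' a) = Fin (\<mu> (qf a))" "qf a < qf a'" using zlt_val[OF aC a'] by auto
          have "a' \<in> K" "a \<in> K" using a'(1) aC CK by blast+
          then have "hsub a' a \<in> K" by simp
          then have lead: "hsub a' a (\<mu> (qf a)) \<noteq> 0" using v(1) hval_Fin_iff by blast
          show ?thesis
          proof (rule hval_eq)
            have "u (\<mu> (qf a)) = a' (\<mu> (qf a))" by (rule u_eq[OF a'(1) mono[OF v(2)]])
            then show "hsub u a (\<mu> (qf a)) \<noteq> 0" using lead by (simp add: hsub_def)
            show "hsub u a g = 0" if "g < \<mu> (qf a)" for g
              using u_eq[OF \<open>a \<in> C\<close> that] by (simp add: hsub_def)
          qed
        qed
        have "\<forall>a\<in>C. P a u"
        proof
          fix a assume a: "a \<in> C"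
          obtain a' where a': "a' \<in> C" "zlt Q \<mu> a a'" using succ[OF a] by blast
          have "a' \<in> K" "a \<in> K" using a' a CK by auto
          have "Fin (qf a') \<le> Q (hadd a' (hsub u a'))"
            by (rule H1) (use \<open>a' \<in> K\<close> uK Qf[OF a'(1)] uval[OF a'(1)] in auto)
          moreover have "hadd a' (hsub u a') = u" by (auto simp: hadd_def hsub_def)
          ultimately have "Fin (qf a') \<le> Q u" by simp
          moreover have "qf a < qf a'" using zlt_val[OF a a'(1,2)] by simp
          ultimately have "Fin (qf a) < Q u" by (metis less_extended_simps(1) less_le_trans)
          then have "Q a < Q u" using Qf[OF a] by simp
          then show "P a u" using uval[OF a] Qf[OF a] unfolding P_def zlt_def by blast
        qed
        then show ?thesis using uK by blast
      qed
    qed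
  qed
  obtain m where m: "m \<in> K" "\<And>a. a \<in> K \<Longrightarrow> P m a \<Longrightarrow> a = m"
    using predicate_Zorn[OF po ch] by blast
  show ?thesis
  proof (rule ccontr)
    assume "\<not> ?thesis"
    then obtain q where q: "Q m = Fin q" using Fin_of m(1) by blast
    obtain f where f: "f \<in> K" "hval f = Fin (\<mu> q)" "Fin q < Q (hadd m f)" using H2[OF m(1) q] by blast
    have "hsub (hadd m f) m = f" by (auto simp: hadd_def hsub_def)
    then have "P m (hadd m f)" unfolding P_def zlt_def using q f by auto
    then have "hadd m f = m" using m f by simp
    then show False using f(3) q by simp
  qed
qed


lemma hval_hone: "hval hone = Fin 0"
  by (simp add: hone_def hval_hconst)

lemma hone_nz: "hone \<noteq> hzero"
  by (metis hval_hone hval_hzero extended.distinct(1))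

lemma hsub_self: "hsub a a = hzero" by (auto simp: hsub_def hzero_def)

lemma hsub_hzero_iff: "hsub a b = hzero \<longleftrightarrow> a = b"
  by (auto simp: hsub_def hzero_def fun_eq_iff)

lemma inverse_exists:
  fixes y :: "'g::linordered_ab_group_add \<Rightarrow> 'k::field"
  assumes y: "y \<in> K" "y \<noteq> hzero"
  shows "\<exists>c\<in>K. hmult y c = hone"
proof -
  obtain g where g: "hval y = Fin g" "y g \<noteq> 0" "\<And>h. h < g \<Longrightarrow> y h = 0"
    using hval_cases[OF y(1)] y(2) by metis
  define Q where "Q c = hval (hsub hone (hmult y c))" for c
  define m where "m = hmono (1 / y g) (- g)"
  have mK: "m \<in> K" by (simp add: m_def)
  have "\<exists>x\<in>K. Q x = Pinf"
  proof (rule pseudo_limit_zorn[where \<mu> = "\<lambda>q. q - g"])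
    show "\<And>p q. p < q \<Longrightarrow> p - g < q - g" by simp
    show "Q x \<noteq> Minf" for x by (simp add: Q_def hval_not_Minf)
    fix x f :: "'g \<Rightarrow> 'k" and q :: 'g
    assume x: "x \<in> K" and f: "f \<in> K" and q: "Q x = Fin q" and vf: "hval f = Fin (q - g)"
    have e: "hsub hone (hmult y (hadd x f)) = hsub (hsub hone (hmult y x)) (hmult y f)"
      using hmult_hadd[OF y(1) x f] by (auto simp: hsub_def hadd_def)
    have "hval (hmult y f) = Fin q" using hval_mult[OF y(1) f g(1) vf] by simp
    then show "Fin q \<le> Q (hadd x f)"
      unfolding Q_def e using hval_ultra(2)[of "hsub hone (hmult y x)" "hmult y f" q] q x f y
      by (simp add: Q_def)
  next
    fix x :: "'g \<Rightarrow> 'k" and q :: 'g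
    assume x: "x \<in> K" and q: "Q x = Fin q"
    define r where "r = hsub hone (hmult y x)"
    have rK: "r \<in> K" using x y by (simp add: r_def)
    have vr: "hval r = Fin q" using q by (simp add: Q_def r_def)
    define f where "f = hmult r m"
    have fK: "f \<in> K" using rK mK by (simp add: f_def)
    have vf: "hval f = Fin (q - g)"
      using hval_mult[OF rK mK vr] g(2) by (simp add: f_def m_def hval_hmono)
    define e where "e = hsub hone (hmult y m)"
    have eK: "e \<in> K" using y mK by (simp add: e_def)
    have ve: "Fin 0 < hval e"
    proof -
      have "e h = 0" if "h \<le> 0" for h
      proof (cases "h = 0")
        case True then show ?thesis using g(2) by (simp add: e_def hsub_def hmult_hmono m_def hone_def hconst_def)
      next
        case False
        then have "h + g < g" using that by simp
        then show ?thesis using g(3) False by (simp add: e_def hsub_def hmult_hmono m_def hone_def hconst_def)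
      qed
      then show ?thesis using hval_gt[OF eK] by blast
    qed
    have key: "hsub hone (hmult y (hadd x f)) = hmult r e"
    proof -
      have "hsub hone (hmult y (hadd x f)) = hsub r (hmult y f)"
        using hmult_hadd[OF y(1) x fK] by (auto simp: hsub_def hadd_def r_def)
      also have "hmult y f = hmult r (hmult y m)"
        unfolding f_def using hmult_assoc[OF y(1) rK mK] hmult_assoc[OF rK y(1) mK] hmult_comm[of y r]
        by simp
      also have "hsub r (hmult r (hmult y m)) = hmult r e"
        using hmult_hsub[OF rK hone_in hmult_in[OF y(1) mK]] by (simp add: e_def hmult_hone)
      finally show ?thesis .
    qed
    have "Fin q < hval (hmult r e)"
    proof (cases rule: hval_cases[OF eK])
      case 1 then show ?thesis by (simp add: hmult_hzero)
    next
      case (2 \<epsilon>)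
      then show ?thesis using hval_mult[OF rK eK vr 2(1)] ve by simp
    qed
    then show "\<exists>f\<in>K. hval f = Fin (q - g) \<and> Fin q < Q (hadd x f)"
      using fK vf key by (auto simp: Q_def)
  qed
  then obtain c where "c \<in> K" "Q c = Pinf" by blast
  then have "hmult y c = hone" by (auto simp: Q_def hval_Pinf_iff hsub_hzero_iff)
  then show ?thesis using \<open>c \<in> K\<close> by blast
qed

lemma inverse_unique:
  assumes "y \<in> K" "c \<in> K" "c' \<in> K" "hmult y c = hone" "hmult y c' = hone"
  shows "c = c'"
proof -
  have "c = hmult c (hmult y c')" using assms by (simp add: hmult_hone)
  also have "\<dots> = hmult (hmult c y) c'" using hmult_assoc assms by metis
  also have "\<dots> = hmult hone c'" using assms(4) hmult_comm[of c y] by simp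
  also have "\<dots> = c'" using hmult_comm[of hone c'] hmult_hone[of c'] by simp
  finally show ?thesis .
qed

lemma hinverse:
  assumes "y \<in> K" "y \<noteq> hzero"
  shows "hinverse y \<in> K" "hmult y (hinverse y) = hone"
proof -
  have "\<exists>!c. c \<in> K \<and> hmult y c = hone"
    using inverse_exists[OF assms] inverse_unique[OF assms(1)] by blast
  then have "hinverse y \<in> K \<and> hmult y (hinverse y) = hone"
    unfolding hinverse_def by (rule theI')
  then show "hinverse y \<in> K" "hmult y (hinverse y) = hone" by auto
qed

lemma hval_hinverse:
  assumes "y \<in> K" "hval y = Fin \<gamma>"
  shows "hval (hinverse y) = Fin (- \<gamma>)"
proof -
  have yn: "y \<noteq> hzero" using assms by auto
  note inv = hinverse[OF assms(1) yn]
  have "hinverse y \<noteq> hzero" using inv hone_nz hmult_hzero by metis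
  then obtain \<delta> where d: "hval (hinverse y) = Fin \<delta>" using hval_cases[OF inv(1)] by metis
  have "hval (hmult y (hinverse y)) = Fin (\<gamma> + \<delta>)" using hval_mult[OF assms(1) inv(1) assms(2) d] .
  then have "Fin (\<gamma> + \<delta>) = Fin 0" using inv(2) hval_hone by metis
  then have "\<delta> = - \<gamma>" by (simp add: eq_neg_iff_add_eq_0 add.commute)
  then show ?thesis using d by simp
qed

lemma hinverse_in: "y \<in> K \<Longrightarrow> y \<noteq> hzero \<Longrightarrow> hinverse y \<in> K" using hinverse by blast

lemma hval_hdivide:
  assumes "x \<in> K" "y \<in> K" "hval x = Fin \<alpha>" "hval y = Fin \<beta>"
  shows "hval (hdivide x y) = Fin (\<alpha> - \<beta>)"
proof -
  have "y \<noteq> hzero" using assms by auto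
  then show ?thesis
    unfolding hdivide_def using hval_mult[OF assms(1) hinverse_in[OF assms(2)] assms(3) hval_hinverse[OF assms(2,4)]]
    by simp
qed


lemma hval_hneg: "hval (hneg a) = hval a"
proof -
  have "hneg a = hzero \<longleftrightarrow> a = hzero" by (auto simp: hneg_def hzero_def fun_eq_iff)
  moreover have "(\<lambda>g. hneg a g \<noteq> 0) = (\<lambda>g. a g \<noteq> 0)" by (auto simp: hneg_def)
  ultimately show ?thesis unfolding hval_def by simp
qed

lemma hval_hsub_lead:
  assumes "u \<in> K" "w \<in> K" "hval u = Fin \<alpha>" "Fin \<alpha> < hval w"
  shows "hval (hsub u w) = Fin \<alpha>"
proof (rule hval_eq)
  have u: "u \<alpha> \<noteq> 0" "\<forall>g<\<alpha>. u g = 0" using hval_Fin_iff[OF assms(1)] assms(3) by blast+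
  have w: "\<forall>g\<le>\<alpha>. w g = 0" using hval_gt[OF assms(2)] assms(4) by blast
  show "hsub u w \<alpha> \<noteq> 0" using u w by (simp add: hsub_def)
  show "hsub u w g = 0" if "g < \<alpha>" for g using u w that by (simp add: hsub_def)
qed

locale hdiff =
  fixes D :: "('g::linordered_ab_group_add \<Rightarrow> 'k::field) \<Rightarrow> ('g \<Rightarrow> 'k)"
  assumes der: "is_derivation D"
    and cst: "constants D = range hconst"
    and dv: "differential_valuation D"
begin

lemma DK[simp]: "a \<in> K \<Longrightarrow> D a \<in> K"
  using der by (simp add: is_derivation_def)

lemma Dadd: "a \<in> K \<Longrightarrow> b \<in> K \<Longrightarrow> D (hadd a b) = hadd (D a) (D b)"
  using der by (simp add: is_derivation_def)

lemma Dmult: "a \<in> K \<Longrightarrow> b \<in> K \<Longrightarrow> D (hmult a b) = hadd (hmult a (D b)) (hmult b (D a))"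
  using der by (simp add: is_derivation_def)

lemma Dconst: "D (hconst c) = hzero"
proof -
  have "hconst c \<in> constants D" using cst by simp
  then show ?thesis by (simp add: constants_def)
qed

lemma Dsub:
  assumes "a \<in> K" "b \<in> K" shows "D (hsub a b) = hsub (D a) (D b)"
proof -
  have "a = hadd (hsub a b) b" by (auto simp: hadd_def hsub_def)
  then have "D a = hadd (D (hsub a b)) (D b)" using Dadd assms by (metis hsub_in)
  then show ?thesis by (auto simp: hadd_def hsub_def fun_eq_iff)
qed

lemma D_nz:
  assumes "y \<in> K" "hval y = Fin \<gamma>" "\<gamma> \<noteq> 0"
  shows "D y \<noteq> hzero"
proof
  assume "D y = hzero"
  then have "y \<in> range hconst" using cst assms(1) by (auto simp: constants_def)
  then obtain c where "y = hconst c" by blast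
  then show False using assms by (cases "c = 0") (auto simp: hval_hconst hconst_zero)
qed

lemma D_Fin:
  assumes "y \<in> K" "hval y = Fin \<gamma>" "\<gamma> \<noteq> 0"
  shows "\<exists>d. hval (D y) = Fin d"
  using D_nz[OF assms] hval_cases[of "D y"] assms(1) by (metis DK)

lemma axiom:
  assumes "a \<in> K" "b \<in> K" "Fin 0 \<le> hval a" "Fin 0 < hval b" "b \<noteq> hzero"
  shows "Fin 0 < hval (hdivide (hmult b (D a)) (D b))"
  using dv assms unfolding differential_valuation_def by blast

lemma KL:
  assumes y: "y \<in> K" "hval y = Fin \<gamma>" "\<gamma> \<noteq> 0" and w: "w \<in> K" "Fin 0 \<le> hval w"
    and d: "hval (D y) = Fin d"
  shows "Fin d < hval (hmult y (D w))"
proof (cases "D w = hzero")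
  case True then show ?thesis by (simp add: hmult_hzero)
next
  case False
  then obtain \<omega> where om: "hval (D w) = Fin \<omega>" using hval_cases[of "D w"] w by (metis DK)
  have yn: "y \<noteq> hzero" using y by auto
  show ?thesis
  proof (cases "\<gamma> > 0")
    case True
    have "Fin 0 < hval (hdivide (hmult y (D w)) (D y))"
      using axiom[OF w(1) y(1) w(2)] True y yn by simp
    moreover have "hval (hdivide (hmult y (D w)) (D y)) = Fin (\<gamma> + \<omega> - d)"
      using hval_hdivide[OF hmult_in[OF y(1) DK[OF w(1)]] DK[OF y(1)] hval_mult[OF y(1) DK[OF w(1)] y(2) om] d] .
    ultimately have "d < \<gamma> + \<omega>" by simp
    then show ?thesis using hval_mult[OF y(1) DK[OF w(1)] y(2) om] by simp
  next
    case False
    then have neg: "\<gamma> < 0" using y(3) by simp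
    define z where "z = hinverse y"
    have zK: "z \<in> K" and yz: "hmult y z = hone" using hinverse[OF y(1) yn] by (auto simp: z_def)
    have vz: "hval z = Fin (- \<gamma>)" using hval_hinverse[OF y(1,2)] by (simp add: z_def)
    have zn: "z \<noteq> hzero" using vz by auto
    obtain \<zeta> where ze: "hval (D z) = Fin \<zeta>" using D_Fin[OF zK vz] neg by auto
    have "hadd (hmult y (D z)) (hmult z (D y)) = hzero"
      using Dmult[OF y(1) zK] yz Dconst by (simp add: hone_def)
    then have "hmult y (D z) = hneg (hmult z (D y))"
      by (auto simp: hadd_def hneg_def hzero_def fun_eq_iff add_eq_0_iff)
    then have "Fin (\<gamma> + \<zeta>) = Fin (- \<gamma> + d)"
      using hval_mult[OF y(1) DK[OF zK] y(2) ze] hval_mult[OF zK DK[OF y(1)] vz d] hval_hneg by metis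
    then have zeta: "\<zeta> = d - (\<gamma> + \<gamma>)" by (simp add: algebra_simps)
    have "Fin 0 < hval (hdivide (hmult z (D w)) (D z))"
      using axiom[OF w(1) zK w(2)] neg vz zn by simp
    moreover have "hval (hdivide (hmult z (D w)) (D z)) = Fin (- \<gamma> + \<omega> - \<zeta>)"
      using hval_hdivide[OF hmult_in[OF zK DK[OF w(1)]] DK[OF zK] hval_mult[OF zK DK[OF w(1)] vz om] ze] .
    ultimately have "0 < - \<gamma> + \<omega> - (d - (\<gamma> + \<gamma>))" using zeta by simp
    then have "d < \<gamma> + \<omega>" by (simp add: algebra_simps)
    then show ?thesis using hval_mult[OF y(1) DK[OF w(1)] y(2) om] by simp
  qed
qed

lemma psi_le:
  assumes y: "y \<in> K" "hval y = Fin \<gamma>" "\<gamma> \<noteq> 0" and z: "z \<in> K" "hval z = Fin \<delta>" "\<gamma> \<le> \<delta>"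
    and d: "hval (D y) = Fin d"
  shows "Fin d \<le> hval (D z)" "\<gamma> < \<delta> \<Longrightarrow> Fin d < hval (D z)"
proof -
  have yn: "y \<noteq> hzero" using y by auto
  define w where "w = hmult z (hinverse y)"
  have iK: "hinverse y \<in> K" using hinverse_in[OF y(1) yn] .
  have wK: "w \<in> K" using z iK by (simp add: w_def)
  have vw: "hval w = Fin (\<delta> - \<gamma>)"
    using hval_mult[OF z(1) iK z(2) hval_hinverse[OF y(1,2)]] by (simp add: w_def)
  have zyw: "z = hmult y w"
    using hmult_assoc[OF y(1) z(1) iK] hmult_comm[of y z] hmult_assoc[OF z(1) y(1) iK] hinverse[OF y(1) yn]
    by (simp add: w_def hmult_hone)
  have Dz: "D z = hadd (hmult y (D w)) (hmult w (D y))" using Dmult[OF y(1) wK] zyw by simp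
  have A: "Fin d < hval (hmult y (D w))" by (rule KL[OF y wK _ d]) (use vw z(3) in simp)
  have B: "hval (hmult w (D y)) = Fin (\<delta> - \<gamma> + d)" using hval_mult[OF wK DK[OF y(1)] vw d] .
  have K1: "hmult y (D w) \<in> K" "hmult w (D y) \<in> K" using y wK by auto
  show "Fin d \<le> hval (D z)"
    unfolding Dz by (rule hval_ultra(1)[OF K1]) (use A B z(3) in auto)
  assume "\<gamma> < \<delta>"
  then show "Fin d < hval (D z)"
    unfolding Dz by (intro hval_ultra_gt(1)[OF K1]) (use A B in auto)
qed

definition psi :: "'g \<Rightarrow> 'g" where
  "psi \<gamma> = (case hval (D (hmono (1::'k) \<gamma>)) of Fin d \<Rightarrow> d)"

lemma psi_mono_val: "\<gamma> \<noteq> 0 \<Longrightarrow> hval (D (hmono (1::'k) \<gamma>)) = Fin (psi \<gamma>)"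
  using D_Fin[OF hmono_in hval_hmono[of "1::'k" \<gamma>]] by (auto simp: psi_def)

lemma psi_eq:
  assumes "z \<in> K" "hval z = Fin \<gamma>" "\<gamma> \<noteq> 0"
  shows "hval (D z) = Fin (psi \<gamma>)"
proof -
  have m: "hmono (1::'k) \<gamma> \<in> K" "hval (hmono (1::'k) \<gamma>) = Fin \<gamma>" by (auto simp: hval_hmono)
  obtain d where d: "hval (D z) = Fin d" using D_Fin[OF assms] by blast
  have "Fin (psi \<gamma>) \<le> hval (D z)" using psi_le(1)[OF m assms(3) assms(1,2) order_refl psi_mono_val[OF assms(3)]] .
  moreover have "Fin d \<le> hval (D (hmono (1::'k) \<gamma>))" using psi_le(1)[OF assms m(1,2) order_refl d] .
  ultimately show ?thesis using d psi_mono_val[OF assms(3)] by simp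
qed

lemma psi_mono:
  assumes "\<gamma> < \<delta>" "\<gamma> \<noteq> 0" "\<delta> \<noteq> 0"
  shows "psi \<gamma> < psi \<delta>"
proof -
  have m: "hmono (1::'k) \<gamma> \<in> K" "hval (hmono (1::'k) \<gamma>) = Fin \<gamma>" by (auto simp: hval_hmono)
  have m2: "hmono (1::'k) \<delta> \<in> K" "hval (hmono (1::'k) \<delta>) = Fin \<delta>" by (auto simp: hval_hmono)
  show ?thesis
    using psi_le(2)[OF m assms(2) m2 less_imp_le[OF assms(1)] psi_mono_val[OF assms(2)] assms(1)]
      psi_mono_val[OF assms(3)] by simp
qed

lemma asym_step:
  assumes ai: "admits_asymptotic_integration D" and r: "r \<in> K" "hval r = Fin q"
  shows "\<exists>f\<in>K. \<exists>\<gamma>. hval f = Fin \<gamma> \<and> \<gamma> \<noteq> 0 \<and> psi \<gamma> = q \<and> Fin q < hval (hsub r (D f))"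
proof -
  have "r \<noteq> hzero" using r by auto
  then obtain d where d: "d \<in> K" "hval r < hval (hsub r (D d))"
    using ai r unfolding admits_asymptotic_integration_def by blast
  have vDd: "hval (D d) = Fin q"
  proof -
    have "hval (hsub r (hsub r (D d))) = Fin q" using hval_hsub_lead[OF r(1) _ r(2)] d r by simp
    moreover have "hsub r (hsub r (D d)) = D d" by (auto simp: hsub_def)
    ultimately show ?thesis by simp
  qed
  define f where "f = hsub d (hconst (d 0))"
  have fK: "f \<in> K" using d by (simp add: f_def)
  have Df: "D f = D d" using Dsub[OF d(1) hconst_in] Dconst by (auto simp: f_def hsub_def hzero_def)
  have "f \<noteq> hzero"
  proof
    assume "f = hzero"
    then have "D f = D (hconst 0)" by (simp add: hconst_zero)
    then show False using Df Dconst vDd by simp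
  qed
  then obtain \<gamma> where g: "hval f = Fin \<gamma>" "f \<gamma> \<noteq> 0" using hval_cases[OF fK] by metis
  have "\<gamma> \<noteq> 0" using g(2) by (auto simp: f_def hsub_def hconst_def)
  moreover have "psi \<gamma> = q" using psi_eq[OF fK g(1) \<open>\<gamma> \<noteq> 0\<close>] Df vDd by simp
  moreover have "Fin q < hval (hsub r (D f))" using d(2) r(2) Df by simp
  ultimately show ?thesis using fK g(1) by blast
qed

lemma integration_from_asym:
  assumes ai: "admits_asymptotic_integration D"
  shows "admits_integration D"
  unfolding admits_integration_def
proof
  fix b assume b: "b \<in> (K :: ('g \<Rightarrow> 'k) set)"
  have surj: "\<exists>\<gamma>. \<gamma> \<noteq> 0 \<and> psi \<gamma> = q" for q
    using asym_step[OF ai hmono_in[of "1::'k" q] hval_hmono[of "1::'k" q]] by auto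
  define \<mu> where "\<mu> q = (SOME \<gamma>. \<gamma> \<noteq> 0 \<and> psi \<gamma> = q)" for q
  have mu: "\<mu> q \<noteq> 0" "psi (\<mu> q) = q" for q
    using someI_ex[OF surj[of q]] by (auto simp: \<mu>_def)
  have mu_unique: "\<gamma> = \<mu> q" if "\<gamma> \<noteq> 0" "psi \<gamma> = q" for \<gamma> q
    using psi_mono[of \<gamma> "\<mu> q"] psi_mono[of "\<mu> q" \<gamma>] mu[of q] that by (metis less_irrefl linorder_neqE)
  define Q where "Q a = hval (hsub b (D a))" for a
  have "\<exists>x\<in>K. Q x = Pinf"
  proof (rule pseudo_limit_zorn[where \<mu> = \<mu>])
    show "\<mu> p < \<mu> q" if "p < q" for p q
    proof (rule ccontr)
      assume "\<not> \<mu> p < \<mu> q"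
      then have "\<mu> q < \<mu> p \<or> \<mu> q = \<mu> p" by auto
      then show False using psi_mono[of "\<mu> q" "\<mu> p"] mu[of p] mu[of q] that by auto
    qed
    show "Q x \<noteq> Minf" for x by (simp add: Q_def hval_not_Minf)
    fix x f :: "'g \<Rightarrow> 'k" and q :: 'g
    assume x: "x \<in> K" and f: "f \<in> K" and q: "Q x = Fin q" and vf: "hval f = Fin (\<mu> q)"
    have e: "hsub b (D (hadd x f)) = hsub (hsub b (D x)) (D f)"
      using Dadd[OF x f] by (auto simp: hsub_def hadd_def)
    have "hval (D f) = Fin q" using psi_eq[OF f vf mu(1)] mu(2) by simp
    then show "Fin q \<le> Q (hadd x f)"
      unfolding Q_def e using hval_ultra(2)[of "hsub b (D x)" "D f" q] q x f b
      by (simp add: Q_def)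
  next
    fix x :: "'g \<Rightarrow> 'k" and q :: 'g
    assume x: "x \<in> K" and q: "Q x = Fin q"
    have rK: "hsub b (D x) \<in> K" using b x by simp
    obtain f \<gamma> where f: "f \<in> K" "hval f = Fin \<gamma>" "\<gamma> \<noteq> 0" "psi \<gamma> = q"
      "Fin q < hval (hsub (hsub b (D x)) (D f))"
      using asym_step[OF ai rK] q by (auto simp: Q_def)
    have e: "hsub b (D (hadd x f)) = hsub (hsub b (D x)) (D f)"
      using Dadd[OF x f(1)] by (auto simp: hsub_def hadd_def)
    show "\<exists>f\<in>K. hval f = Fin (\<mu> q) \<and> Fin q < Q (hadd x f)"
      using f e mu_unique[OF f(3,4)] by (auto simp: Q_def)
  qed
  then obtain a where "a \<in> K" "Q a = Pinf" by blast
  then show "\<exists>a\<in>K. D a = b" by (auto simp: Q_def hval_Pinf_iff hsub_hzero_iff)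
qed

lemma asym_from_integration:
  assumes "admits_integration D"
  shows "admits_asymptotic_integration D"
  unfolding admits_asymptotic_integration_def
proof (intro ballI impI)
  fix b :: "'g \<Rightarrow> 'k" assume b: "b \<in> K" "b \<noteq> hzero"
  then obtain a where a: "a \<in> K" "D a = b" using assms unfolding admits_integration_def by blast
  obtain \<beta> where "hval b = Fin \<beta>" using b hval_cases by metis
  then show "\<exists>a\<in>K. hval b < hval (hsub b (D a))"
    using a by (intro bexI[of _ a]) (auto simp: hsub_self)
qed

end

theorem mainTheorem6:
  fixes D :: "('g::linordered_ab_group_add \<Rightarrow> 'k::field) \<Rightarrow> ('g \<Rightarrow> 'k)"
  assumes "is_derivation D"
    and "constants D = range hconst"
    and "differential_valuation D"
  shows "admits_integration D \<longleftrightarrow> admits_asymptotic_integration D"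
proof -
  interpret hdiff D using assms by unfold_locales
  show ?thesis using integration_from_asym asym_from_integration by blast
qed


end
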